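(* Let $[\underline R,\overline R]$ be a closed interval of a rich single-crossing domain and $\mu$ a non-trivial continuous probability measure on its Borel $\sigma$-algebra. Let $F^c=(t^c,q^c):[\underline R,\overline R]\to\mathbb{Z}$ be strategy-proof and individually rational with countable, closed range having finitely many limit points, and suppose $E(F)<E(F^c)$ for every strategy-proof, individually rational mechanism $F$ with finite range, where $E(F)=\int t\,d\mu$. Then for every $\epsilon>0$ there is a strategy-proof, individually rational mechanism $F^\epsilon$ with finite range such that $E(F^c)-E(F^\epsilon)\le\epsilon$. Further, if an optimal finite-range mechanism $F^*$ exists (maximizing $E$ among strategy-proof, individually rational mechanisms with finite range), then $E(F^c)\le E(F^* )$.
   Context: $\mathbb{Z}=[0,\infty)\times[0,1]$; $(t',q')<(t'',q'')$ means $t'<t''$, $q'<q''$; $x\le y$ means $x=y$ or $x<y$; $\square(z)=\{x:x\le z\}$. A classical preference is a complete transitive relation $R$ on $\mathbb{Z}$ strictly decreasing in $t$ for fixed $q$, strictly increasing in $q$ for fixed $t$, with closed upper and lower contour sets. Distinct classical preferences satisfy single-crossing if any indifference set of one meets any indifference set of the other in at most one point. A rich single-crossing domain is a set of pairwise single-crossing classical preferences such that for all $x'<x''$ some member is indifferent between them. For distinct members, $R'\prec R''$ means $\square(z)\cap\{x:xR''z\}\subseteq\square(z)\cap\{x:xR'z\}$ for all $z$; $\prec$ is a linear order; $[\underline R,\overline R]$ carries the subspace order topology and Borel $\sigma$-algebra. $\mu$ is non-trivial if every interval with more than one element has positive measure; continuous if for all Borel $A$ with $\mu(A)>0$ and $0<c<\mu(A)$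 there is Borel $B\subseteq A$ with $\mu(B)=c$. A mechanism $F$ is strategy-proof if $F(R')R'F(R'')$ for all $R',R''$, individually rational if $F(R)R(0,0)$ for all $R$. *)

theory Defs
  imports "HOL-Probability.Probability"
begin

definition ZZ :: "(real \<times> real) set" where
  "ZZ = {x. 0 \<le> fst x \<and> 0 \<le> snd x \<and> snd x \<le> 1}"

definition zlt :: "real \<times> real \<Rightarrow> real \<times> real \<Rightarrow> bool" where
  "zlt x y \<longleftrightarrow> fst x < fst y \<and> snd x < snd y"

definition zbox :: "real \<times> real \<Rightarrow> (real \<times> real) set" where
  "zbox z = {x. x = z \<or> zlt x z}"

text \<open>A preference is a binary relation on Z (R x y means x is weakly preferred to y).\<close>
type_synonym pref = "real \<times> real \<Rightarrow> real \<times> real \<Rightarrow> bool"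

definition indiff :: "pref \<Rightarrow> real \<times> real \<Rightarrow> real \<times> real \<Rightarrow> bool" where
  "indiff R x y \<longleftrightarrow> R x y \<and> R y x"

definition classical :: "pref \<Rightarrow> bool" where
  "classical R \<longleftrightarrow>
     (\<forall>x y. R x y \<longrightarrow> x \<in> ZZ \<and> y \<in> ZZ) \<and>
     (\<forall>x\<in>ZZ. \<forall>y\<in>ZZ. R x y \<or> R y x) \<and>
     (\<forall>x y z. R x y \<and> R y z \<longrightarrow> R x z) \<and>
     (\<forall>q t' t''. 0 \<le> q \<and> q \<le> 1 \<and> 0 \<le> t' \<and> t' < t'' \<longrightarrow>
         R (t', q) (t'', q) \<and> \<not> R (t'', q) (t', q)) \<and>
     (\<forall>t q' q''. 0 \<le> t \<and> 0 \<le> q' \<and> q' < q'' \<and> q'' \<le> 1 \<longrightarrow>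
         R (t, q'') (t, q') \<and> \<not> R (t, q') (t, q'')) \<and>
     (\<forall>z\<in>ZZ. closed {x\<in>ZZ. R x z} \<and> closed {x\<in>ZZ. R z x})"

definition single_crossing :: "pref \<Rightarrow> pref \<Rightarrow> bool" where
  "single_crossing R' R'' \<longleftrightarrow>
     (\<forall>z1\<in>ZZ. \<forall>z2\<in>ZZ. \<forall>x y.
        x \<in> {w\<in>ZZ. indiff R' w z1} \<inter> {w\<in>ZZ. indiff R'' w z2} \<and>
        y \<in> {w\<in>ZZ. indiff R' w z1} \<inter> {w\<in>ZZ. indiff R'' w z2} \<longrightarrow> x = y)"

definition rich_sc_domain :: "pref set \<Rightarrow> bool" where
  "rich_sc_domain D \<longleftrightarrow>
     (\<forall>R\<in>D. classical R) \<and>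
     (\<forall>R'\<in>D. \<forall>R''\<in>D. R' \<noteq> R'' \<longrightarrow> single_crossing R' R'') \<and>
     (\<forall>x'\<in>ZZ. \<forall>x''\<in>ZZ. zlt x' x'' \<longrightarrow> (\<exists>R\<in>D. indiff R x' x''))"

definition prec :: "pref \<Rightarrow> pref \<Rightarrow> bool" where
  "prec R' R'' \<longleftrightarrow> R' \<noteq> R'' \<and>
     (\<forall>z\<in>ZZ. zbox z \<inter> ZZ \<inter> {x. R'' x z} \<subseteq> zbox z \<inter> ZZ \<inter> {x. R' x z})"

definition preceq :: "pref \<Rightarrow> pref \<Rightarrow> bool" where
  "preceq R' R'' \<longleftrightarrow> R' = R'' \<or> prec R' R''"

definition pref_interval :: "pref set \<Rightarrow> pref \<Rightarrow> pref \<Rightarrow> pref set" where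
  "pref_interval D lo hi = {R\<in>D. preceq lo R \<and> preceq R hi}"

definition order_topology_on :: "pref set \<Rightarrow> pref topology" where
  "order_topology_on I = topology_generated_by
     (insert I ({{R\<in>I. prec a R} | a. a \<in> I} \<union> {{R\<in>I. prec R a} | a. a \<in> I}))"

definition borel_sets_on :: "pref set \<Rightarrow> pref set set" where
  "borel_sets_on I = sigma_sets I {U. openin (order_topology_on I) U}"

definition nontrivial_measure :: "pref set \<Rightarrow> pref measure \<Rightarrow> bool" where
  "nontrivial_measure I \<mu> \<longleftrightarrow>
     (\<forall>a\<in>I. \<forall>b\<in>I. prec a b \<longrightarrow> measure \<mu> {R\<in>I. preceq a R \<and> preceq R b} > 0)"

definition continuous_measure :: "pref measure \<Rightarrow> bool" where
  "continuous_measure \<mu> \<longleftrightarrow>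
     (\<forall>A\<in>sets \<mu>. \<forall>c. measure \<mu> A > 0 \<and> 0 < c \<and> c < measure \<mu> A \<longrightarrow>
        (\<exists>B\<in>sets \<mu>. B \<subseteq> A \<and> measure \<mu> B = c))"

definition mechanism :: "pref set \<Rightarrow> (pref \<Rightarrow> real \<times> real) \<Rightarrow> bool" where
  "mechanism I F \<longleftrightarrow> (\<forall>R\<in>I. F R \<in> ZZ)"

definition strategy_proof :: "pref set \<Rightarrow> (pref \<Rightarrow> real \<times> real) \<Rightarrow> bool" where
  "strategy_proof I F \<longleftrightarrow> (\<forall>R'\<in>I. \<forall>R''\<in>I. R' (F R') (F R''))"

definition individually_rational :: "pref set \<Rightarrow> (pref \<Rightarrow> real \<times> real) \<Rightarrow> bool" where
  "individually_rational I F \<longleftrightarrow> (\<forall>R\<in>I. R (F R) (0, 0))"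

definition revenue :: "pref measure \<Rightarrow> (pref \<Rightarrow> real \<times> real) \<Rightarrow> real" where
  "revenue \<mu> F = integral\<^sup>L \<mu> (\<lambda>R. fst (F R))"

definition finite_sp_ir :: "pref set \<Rightarrow> (pref \<Rightarrow> real \<times> real) \<Rightarrow> bool" where
  "finite_sp_ir I F \<longleftrightarrow> mechanism I F \<and> strategy_proof I F \<and>
     individually_rational I F \<and> finite (F ` I)"

end

theory Submission
  imports Defs
begin


lemma dist_t: "dist (a::real, b::real) (c, b) = \<bar>a - c\<bar>"
  by (simp add: dist_Pair_Pair dist_real_def)
lemma dist_q: "dist (a::real, b::real) (a, d) = \<bar>b - d\<bar>"
  by (simp add: dist_Pair_Pair dist_real_def)

lemma cl_ZZ: "classical R \<Longrightarrow> R x y \<Longrightarrow> x \<in> ZZ \<and> y \<in> ZZ"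
  unfolding classical_def by blast
lemma cl_total: "classical R \<Longrightarrow> x \<in> ZZ \<Longrightarrow> y \<in> ZZ \<Longrightarrow> R x y \<or> R y x"
  unfolding classical_def by blast
lemma cl_refl: "classical R \<Longrightarrow> x \<in> ZZ \<Longrightarrow> R x x"
  using cl_total by blast
lemma cl_trans: "classical R \<Longrightarrow> R x y \<Longrightarrow> R y z \<Longrightarrow> R x z"
  unfolding classical_def by blast
lemma cl_t: "classical R \<Longrightarrow> 0 \<le> q \<Longrightarrow> q \<le> 1 \<Longrightarrow> 0 \<le> t' \<Longrightarrow> t' < t'' \<Longrightarrow>
   R (t', q) (t'', q) \<and> \<not> R (t'', q) (t', q)"
  unfolding classical_def by blast
lemma cl_q: "classical R \<Longrightarrow> 0 \<le> t \<Longrightarrow> 0 \<le> q' \<Longrightarrow> q' < q'' \<Longrightarrow> q'' \<le> 1 \<Longrightarrow>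
   R (t, q'') (t, q') \<and> \<not> R (t, q') (t, q'')"
  unfolding classical_def by blast
lemma cl_closed1: "classical R \<Longrightarrow> z \<in> ZZ \<Longrightarrow> closed {x\<in>ZZ. R x z}"
  unfolding classical_def by blast
lemma cl_closed2: "classical R \<Longrightarrow> z \<in> ZZ \<Longrightarrow> closed {x\<in>ZZ. R z x}"
  unfolding classical_def by blast

lemma ZZ_iff: "(t, q) \<in> ZZ \<longleftrightarrow> 0 \<le> t \<and> 0 \<le> q \<and> q \<le> 1"
  by (simp add: ZZ_def)

lemma cl_dom:
  assumes R: "classical R" and x: "x \<in> ZZ" and y: "y \<in> ZZ"
    and le: "fst x \<le> fst y" "snd y \<le> snd x"
  shows "R x y \<and> (x \<noteq> y \<longrightarrow> \<not> R y x)"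
proof -
  obtain a b where xa: "x = (a,b)" by (cases x)
  obtain c d where yc: "y = (c,d)" by (cases y)
  have ab: "0 \<le> a" "0 \<le> b" "b \<le> 1" using x xa by (auto simp: ZZ_def)
  have cd: "0 \<le> c" "0 \<le> d" "d \<le> 1" using y yc by (auto simp: ZZ_def)
  have le': "a \<le> c" "d \<le> b" using le xa yc by auto
  have m: "(a,d) \<in> ZZ" using ab cd by (simp add: ZZ_def)
  have r1: "R (a,b) (a,d)"
    using cl_q[OF R, of a d b] cl_refl[OF R] m ab cd le' by (cases "d < b") auto
  have r2: "R (a,d) (c,d)"
    using cl_t[OF R, of d a c] cl_refl[OF R] m ab cd le' by (cases "a < c") auto
  have "R x y" using cl_trans[OF R r1 r2] xa yc by simp
  moreover have "x \<noteq> y \<longrightarrow> \<not> R y x"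
  proof
    assume ne: "x \<noteq> y"
    show "\<not> R y x"
    proof
      assume ryx: "R y x"
      show False
      proof (cases "d < b")
        case True
        have "R (a,d) (a,b)" using cl_trans[OF R r2] ryx xa yc by simp
        then show False using cl_q[OF R, of a d b] ab cd True by auto
      next
        case False
        then have db: "d = b" using le' by auto
        then have ac: "a < c" using ne le' xa yc by auto
        have "R (c,d) (a,d)" using cl_trans[OF R _ r1] ryx xa yc db by simp
        then show False using cl_t[OF R, of d a c] ab cd ac by auto
      qed
    qed
  qed
  ultimately show ?thesis by blast
qed

lemma cl_open1:
  assumes R: "classical R" and z: "z \<in> ZZ" and n: "\<not> R x z"
  shows "\<exists>e>0. \<forall>y. dist y x < e \<longrightarrow> \<not> R y z"
proof (cases "x \<in> ZZ")
  case True
  have "open (- {w\<in>ZZ. R w z})" using cl_closed1[OF R z] by auto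
  moreover have "x \<in> - {w\<in>ZZ. R w z}" using n by auto
  ultimately obtain e where "e > 0" "\<forall>y. dist y x < e \<longrightarrow> y \<in> - {w\<in>ZZ. R w z}"
    unfolding open_dist by blast
  then show ?thesis using cl_ZZ[OF R] by blast
next
  case False
  have "open (- ZZ)"
  proof -
    have "closed ZZ" unfolding ZZ_def
      by (intro closed_Collect_conj closed_Collect_le continuous_intros)
    then show ?thesis by auto
  qed
  then obtain e where "e > 0" "\<forall>y. dist y x < e \<longrightarrow> y \<in> - ZZ"
    using False unfolding open_dist by blast
  then show ?thesis using cl_ZZ[OF R] by blast
qed

lemma cl_open2:
  assumes R: "classical R" and z: "z \<in> ZZ" and n: "\<not> R z x"
  shows "\<exists>e>0. \<forall>y. dist y x < e \<longrightarrow> \<not> R z y"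
proof (cases "x \<in> ZZ")
  case True
  have "open (- {w\<in>ZZ. R z w})" using cl_closed2[OF R z] by auto
  moreover have "x \<in> - {w\<in>ZZ. R z w}" using n by auto
  ultimately obtain e where "e > 0" "\<forall>y. dist y x < e \<longrightarrow> y \<in> - {w\<in>ZZ. R z w}"
    unfolding open_dist by blast
  then show ?thesis using cl_ZZ[OF R] by blast
next
  case False
  have "open (- ZZ)"
  proof -
    have "closed ZZ" unfolding ZZ_def
      by (intro closed_Collect_conj closed_Collect_le continuous_intros)
    then show ?thesis by auto
  qed
  then obtain e where "e > 0" "\<forall>y. dist y x < e \<longrightarrow> y \<in> - ZZ"
    using False unfolding open_dist by blast
  then show ?thesis using cl_ZZ[OF R] by blast
qed



definition eset :: "pref \<Rightarrow> pref \<Rightarrow> real \<times> real \<Rightarrow> real set" where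
  "eset R1 R2 z = {q. \<exists>t. 0 \<le> t \<and> t < fst z \<and> 0 < q \<and> q < snd z \<and> \<not> R2 z (t,q) \<and> \<not> R1 (t,q) z}"

definition Sset :: "pref \<Rightarrow> pref \<Rightarrow> real \<times> real \<Rightarrow> real set" where
  "Sset R1 R2 z = {q. 0 < q \<and> q < snd z \<and> (\<not> R1 z (0,q) \<or> \<not> R2 z (0,q))}"

definition scp :: "pref \<Rightarrow> pref \<Rightarrow> bool" where
  "scp R1 R2 \<longleftrightarrow> (\<forall>x z. x \<in> ZZ \<longrightarrow> z \<in> ZZ \<longrightarrow> R1 x z \<longrightarrow> R1 z x \<longrightarrow> R2 x z \<longrightarrow> R2 z x \<longrightarrow> x = z)"

lemma scp_sym: "scp R1 R2 \<Longrightarrow> scp R2 R1"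
  unfolding scp_def by blast

lemma sc_scp: assumes R1: "classical R1" and R2: "classical R2" and "single_crossing R1 R2" shows "scp R1 R2"
  unfolding scp_def
proof (intro allI impI)
  fix x z assume h: "x \<in> ZZ" "z \<in> ZZ" "R1 x z" "R1 z x" "R2 x z" "R2 z x"
  have zz: "R1 z z" "R2 z z" using h(2) cl_refl[OF R1] cl_refl[OF R2] by auto
  have "x \<in> {w\<in>ZZ. indiff R1 w z} \<inter> {w\<in>ZZ. indiff R2 w z}" using h unfolding indiff_def by auto
  moreover have "z \<in> {w\<in>ZZ. indiff R1 w z} \<inter> {w\<in>ZZ. indiff R2 w z}" using h zz unfolding indiff_def by auto
  ultimately show "x = z" using assms(3) h(2) unfolding single_crossing_def by blast
qed

lemma Sset_sym: "Sset R1 R2 z = Sset R2 R1 z"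
  unfolding Sset_def by auto

lemma eset_open:
  assumes R1: "classical R1" and R2: "classical R2" and z: "z \<in> ZZ"
  shows "open (eset R1 R2 z)"
  unfolding open_dist
proof (intro ballI)
  fix q assume "q \<in> eset R1 R2 z"
  then obtain t where t: "0 \<le> t" "t < fst z" "0 < q" "q < snd z" "\<not> R2 z (t,q)" "\<not> R1 (t,q) z"
    unfolding eset_def by blast
  obtain e1 where e1: "e1 > 0" "\<forall>y. dist y (t,q) < e1 \<longrightarrow> \<not> R2 z y" using cl_open2[OF R2 z t(5)] by blast
  obtain e2 where e2: "e2 > 0" "\<forall>y. dist y (t,q) < e2 \<longrightarrow> \<not> R1 y z" using cl_open1[OF R1 z t(6)] by blast
  define e where "e = min (min e1 e2) (min q (snd z - q))"
  have "e > 0" using e1 e2 t unfolding e_def by auto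
  moreover have "\<forall>q'. dist q' q < e \<longrightarrow> q' \<in> eset R1 R2 z"
  proof (intro allI impI)
    fix q' assume "dist q' q < e"
    then have d: "\<bar>q' - q\<bar> < e" by (simp add: dist_real_def)
    then have "dist (t,q') (t,q) < e1" "dist (t,q') (t,q) < e2" unfolding e_def by (auto simp: dist_q)
    then show "q' \<in> eset R1 R2 z" unfolding eset_def using e1 e2 t d unfolding e_def
      by (intro CollectI exI[of _ t]) auto
  qed
  ultimately show "\<exists>e>0. \<forall>y. dist y q < e \<longrightarrow> y \<in> eset R1 R2 z" by blast
qed

lemma eset_disj:
  assumes R1: "classical R1" and R2: "classical R2" and z: "z \<in> ZZ"
    and a: "q \<in> eset R1 R2 z" and b: "q \<in> eset R2 R1 z"
  shows False
proof -
  obtain t1 where t1: "0 \<le> t1" "t1 < fst z" "0 < q" "q < snd z" "\<not> R2 z (t1,q)" "\<not> R1 (t1,q) z"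
    using a unfolding eset_def by blast
  obtain t2 where t2: "0 \<le> t2" "t2 < fst z" "\<not> R1 z (t2,q)" "\<not> R2 (t2,q) z"
    using b unfolding eset_def by blast
  have q1: "q \<le> 1" using z t1 by (auto simp: ZZ_def)
  have p1: "(t1,q) \<in> ZZ" "(t2,q) \<in> ZZ" using t1 t2 q1 by (auto simp: ZZ_def)
  show False
  proof (cases "t1 \<le> t2")
    case True
    have "R1 (t1,q) (t2,q)" using cl_dom[OF R1 p1] True by simp
    moreover have "R1 (t2,q) z" using cl_total[OF R1 p1(2) z] t2 by blast
    ultimately show False using cl_trans[OF R1] t1 by blast
  next
    case False
    have "R2 (t2,q) (t1,q)" using cl_dom[OF R2 p1(2) p1(1)] False by simp
    moreover have "R2 (t1,q) z" using cl_total[OF R2 p1(1) z] t1 by blast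
    ultimately show False using cl_trans[OF R2] t2 by blast
  qed
qed

lemma Sset_conn: assumes R1: "classical R1" and R2: "classical R2" and z: "z \<in> ZZ"
  shows "connected (Sset R1 R2 z)"
  unfolding connected_iff_interval
proof (intro ballI allI impI)
  fix x y w assume x: "x \<in> Sset R1 R2 z" and y: "y \<in> Sset R1 R2 z" and xw: "x \<le> w" and wy: "w \<le> y"
  have xs: "0 < x" "x < snd z" "\<not> R1 z (0,x) \<or> \<not> R2 z (0,x)" using x unfolding Sset_def by auto
  have ys: "y < snd z" using y unfolding Sset_def by auto
  have q1: "snd z \<le> 1" using z by (auto simp: ZZ_def)
  have p: "(0,w) \<in> ZZ" "(0,x) \<in> ZZ" using xs xw wy ys q1 by (auto simp: ZZ_def)
  have "R1 (0,w) (0,x)" "R2 (0,w) (0,x)" using cl_dom[OF R1 p] cl_dom[OF R2 p] xw by auto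
  then have "\<not> R1 z (0,w) \<or> \<not> R2 z (0,w)" using xs(3) cl_trans[OF R1] cl_trans[OF R2] by blast
  then show "w \<in> Sset R1 R2 z" unfolding Sset_def using xs xw wy ys by auto
qed

lemma closed_line: "closed C \<Longrightarrow> closed {t::real. (t, q::real) \<in> C}"
proof -
  assume "closed C"
  then have "closed ((\<lambda>t. (t,q)) -` C)"
    by (intro continuous_closed_vimage) (auto intro!: continuous_intros)
  then show ?thesis by (simp add: vimage_def)
qed

lemma caseA:
  assumes R1: "classical R1" and R2: "classical R2" and z: "z \<in> ZZ" and sc: "scp R1 R2"
    and q: "0 < q" "q < snd z" and n: "\<not> R1 z (0,q)"
  shows "q \<in> eset R1 R2 z \<union> eset R2 R1 z"
proof -
  obtain tz qz where zz: "z = (tz,qz)" by (cases z)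
  have qz_def: "q < qz" using q zz by simp
  have zb: "0 \<le> tz" "0 \<le> qz" "qz \<le> 1" using z zz by (auto simp: ZZ_def)
  have p0: "(0,q) \<in> ZZ" using q zb qz_def by (auto simp: ZZ_def)
  have tzp: "tz > 0"
  proof (rule ccontr)
    assume "\<not> tz > 0" then have "tz = 0" using zb by auto
    then have "R1 z (0,q)" using cl_dom[OF R1 z p0] zz q qz_def by auto
    then show False using n by blast
  qed
  have pl: "\<And>t. 0 \<le> t \<Longrightarrow> (t,q) \<in> ZZ" using q zb qz_def by (auto simp: ZZ_def)
  define A where "A = {t. (t,q) \<in> {w\<in>ZZ. R1 w z}}"
  define B where "B = {t. (t,q) \<in> {w\<in>ZZ. R1 z w}}"
  have cA: "closed A" unfolding A_def by (rule closed_line[OF cl_closed1[OF R1 z]])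
  have cB: "closed B" unfolding B_def by (rule closed_line[OF cl_closed2[OF R1 z]])
  have cov: "{0..tz} \<subseteq> A \<union> B"
  proof
    fix t assume "t \<in> {0..tz}" then have t0: "0 \<le> t" by auto
    show "t \<in> A \<union> B" using cl_total[OF R1 pl[OF t0] z] pl[OF t0] unfolding A_def B_def by auto
  qed
  have "0 \<in> A" unfolding A_def using cl_total[OF R1 p0 z] n p0 by auto
  moreover have "tz \<in> B" unfolding B_def using cl_dom[OF R1 z pl[of tz]] zz q qz_def zb pl[of tz] by auto
  ultimately have ab: "A \<inter> {0..tz} \<noteq> {}" "B \<inter> {0..tz} \<noteq> {}" using tzp by auto
  have "A \<inter> B \<inter> {0..tz} \<noteq> {}"
  proof
    assume "A \<inter> B \<inter> {0..tz} = {}"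
    from connected_closedD[OF connected_Icc[of 0 tz] this cov cA cB] ab show False by blast
  qed
  then obtain t where t: "0 \<le> t" "t \<le> tz" "R1 (t,q) z" "R1 z (t,q)" unfolding A_def B_def by auto
  have t0: "t \<noteq> 0" using t n by auto
  have "\<not> R1 (tz,q) z" using cl_dom[OF R1 z pl[of tz]] zz q qz_def zb by auto
  then have ttz: "t \<noteq> tz" using t by auto
  have tt: "0 < t" "t < tz" using t t0 ttz by auto
  show ?thesis
  proof (cases "R2 (t,q) z")
    case False
    obtain e where e: "e > 0" "\<forall>y. dist y (t,q) < e \<longrightarrow> \<not> R2 y z" using cl_open1[OF R2 z False] by blast
    define d where "d = min (e/2) (t/2)"
    have d0: "0 < d" unfolding d_def using e tt by simp
    have d1: "d \<le> e/2" unfolding d_def by (rule min.cobounded1)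
    have d2: "d \<le> t/2" unfolding d_def by (rule min.cobounded2)
    note d = d0 d1 d2
    define t' where "t' = t - d"
    have t': "0 \<le> t'" "t' < t" "dist (t',q) (t,q) < e" unfolding t'_def using d by (auto simp: dist_t)
    have "\<not> R2 (t',q) z" using e t' by blast
    moreover have "\<not> R1 z (t',q)"
    proof
      assume "R1 z (t',q)"
      then have "R1 (t,q) (t',q)" using cl_trans[OF R1 t(3)] by blast
      then show False using cl_t[OF R1, of q t' t] t' q zb qz_def by auto
    qed
    ultimately have "q \<in> eset R2 R1 z" unfolding eset_def using t' tt q zz by (intro CollectI exI[of _ t']) auto
    then show ?thesis by blast
  next
    case True
    show ?thesis
    proof (cases "R2 z (t,q)")
      case True
      then have "(t,q) = z" using sc \<open>R2 (t,q) z\<close> t pl[of t] z unfolding scp_def by blast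
      then show ?thesis using q zz qz_def by auto
    next
      case False
      obtain e where e: "e > 0" "\<forall>y. dist y (t,q) < e \<longrightarrow> \<not> R2 z y" using cl_open2[OF R2 z False] by blast
      define d where "d = min (e/2) ((tz - t)/2)"
      have d0: "0 < d" unfolding d_def using e tt by simp
      have d1: "d \<le> e/2" unfolding d_def by (rule min.cobounded1)
      have d2: "d \<le> (tz - t)/2" unfolding d_def by (rule min.cobounded2)
      note d = d0 d1 d2
      define t' where "t' = t + d"
      have t': "t < t'" "t' < tz" "dist (t',q) (t,q) < e" unfolding t'_def using d by (auto simp: dist_t)
      have "\<not> R2 z (t',q)" using e t' by blast
      moreover have "\<not> R1 (t',q) z"
      proof
        assume "R1 (t',q) z"
        then have "R1 (t',q) (t,q)" using cl_trans[OF R1 _ t(4)] by blast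
        then show False using cl_t[OF R1, of q t t'] t' tt q zb qz_def by auto
      qed
      ultimately have "q \<in> eset R1 R2 z" unfolding eset_def using t' tt q zz by (intro CollectI exI[of _ t']) auto
      then show ?thesis by blast
    qed
  qed
qed

lemma Sset_cover:
  assumes R1: "classical R1" and R2: "classical R2" and z: "z \<in> ZZ" and sc: "scp R1 R2"
  shows "Sset R1 R2 z \<subseteq> eset R1 R2 z \<union> eset R2 R1 z"
proof
  fix q assume "q \<in> Sset R1 R2 z"
  then have q: "0 < q" "q < snd z" "\<not> R1 z (0,q) \<or> \<not> R2 z (0,q)" unfolding Sset_def by auto
  show "q \<in> eset R1 R2 z \<union> eset R2 R1 z"
  proof (cases "\<not> R1 z (0,q)")
    case True then show ?thesis using caseA[OF R1 R2 z sc q(1) q(2)] by blast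
  next
    case False then show ?thesis using caseA[OF R2 R1 z scp_sym[OF sc] q(1) q(2)] q(3) by blast
  qed
qed

lemma sw_nonempty:
  assumes R1: "classical R1" and R2: "classical R2" and z: "z \<in> ZZ"
    and x: "x \<in> ZZ" "zlt x z" "\<not> R2 z x" "\<not> R1 x z"
  shows "Sset R1 R2 z \<inter> eset R1 R2 z \<noteq> {}"
proof -
  obtain a b where ab: "x = (a,b)" by (cases x)
  have abz: "a < fst z" "b < snd z" "0 \<le> a" "0 \<le> b" using x ab unfolding zlt_def by (auto simp: ZZ_def)
  have q1: "snd z \<le> 1" using z by (auto simp: ZZ_def)
  obtain e where e: "e > 0" "\<forall>y. dist y x < e \<longrightarrow> \<not> R1 y z" using cl_open1[OF R1 z x(4)] by blast
  define d where "d = min (e/2) ((snd z - b)/2)"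
  have d0: "0 < d" unfolding d_def using e abz by simp
  have d1: "d \<le> e/2" unfolding d_def by (rule min.cobounded1)
  have d2: "d \<le> (snd z - b)/2" unfolding d_def by (rule min.cobounded2)
  note d = d0 d1 d2
  define q where "q = b + d"
  have qq: "b < q" "q < snd z" "dist (a,q) x < e" unfolding q_def using d ab by (auto simp: dist_q)
  have pz: "(a,q) \<in> ZZ" "(0,q) \<in> ZZ" using qq abz q1 by (auto simp: ZZ_def)
  have n1: "\<not> R1 (a,q) z" using e qq by blast
  have "R2 (a,q) (a,b)" using cl_dom[OF R2 pz(1) x(1)[unfolded ab]] qq by auto
  then have n2: "\<not> R2 z (a,q)" using cl_trans[OF R2] x(3) ab by blast
  have "R2 (0,q) (a,q)" using cl_dom[OF R2 pz(2) pz(1)] abz by auto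
  then have n3: "\<not> R2 z (0,q)" using cl_trans[OF R2] n2 by blast
  have "q \<in> eset R1 R2 z" unfolding eset_def using n1 n2 abz qq by (intro CollectI exI[of _ a]) auto
  moreover have "q \<in> Sset R1 R2 z" unfolding Sset_def using n3 abz qq by auto
  ultimately show ?thesis by blast
qed

lemma local_lemma:
  assumes R1: "classical R1" and R2: "classical R2" and z: "z \<in> ZZ" and sc: "scp R1 R2"
    and x: "x \<in> ZZ" "zlt x z" "\<not> R2 z x" "\<not> R1 x z"
    and y: "y \<in> ZZ" "zlt y z" "\<not> R1 z y" "\<not> R2 y z"
  shows False
proof -
  have 1: "eset R1 R2 z \<inter> Sset R1 R2 z \<noteq> {}" using sw_nonempty[OF R1 R2 z x] by blast
  have 2: "eset R2 R1 z \<inter> Sset R1 R2 z \<noteq> {}" using sw_nonempty[OF R2 R1 z y] Sset_sym by blast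
  have "eset R1 R2 z \<inter> eset R2 R1 z \<inter> Sset R1 R2 z = {}" using eset_disj[OF R1 R2 z] by blast
  then show False using connectedD[OF Sset_conn[OF R1 R2 z] eset_open[OF R1 R2 z] eset_open[OF R2 R1 z]
      _ Sset_cover[OF R1 R2 z sc]] 1 2 by blast
qed



definition Eset :: "pref \<Rightarrow> pref \<Rightarrow> (real \<times> real) set" where
  "Eset R1 R2 = {z. \<exists>x\<in>ZZ. zlt x z \<and> \<not> R2 z x \<and> \<not> R1 x z}"

definition ZZo :: "(real \<times> real) set" where
  "ZZo = {z. 0 < fst z \<and> 0 < snd z \<and> snd z \<le> 1}"

lemma ZZo_ZZ: "z \<in> ZZo \<Longrightarrow> z \<in> ZZ"
  unfolding ZZo_def ZZ_def by auto

lemma ZZo_conn: "connected ZZo"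
proof (rule convex_connected)
  show "convex ZZo" unfolding convex_def
  proof (intro ballI allI impI)
    fix x y :: "real \<times> real" and u v :: real
    assume x: "x \<in> ZZo" and y: "y \<in> ZZo" and u: "0 \<le> u" and v: "0 \<le> v" and uv: "u + v = 1"
    have xs: "0 < fst x" "0 < snd x" "snd x \<le> 1" using x unfolding ZZo_def by auto
    have ys: "0 < fst y" "0 < snd y" "snd y \<le> 1" using y unfolding ZZo_def by auto
    have pos: "\<And>a c. 0 < a \<Longrightarrow> 0 < c \<Longrightarrow> 0 < u * a + v * c"
    proof -
      fix a c :: real assume a: "0 < a" and c: "0 < c"
      show "0 < u * a + v * c"
      proof (cases "u > 0")
        case True then show ?thesis using a c v by (simp add: add_pos_nonneg)
      next
        case False then have "v = 1" using u uv by auto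
        then show ?thesis using a c u by (simp add: add_nonneg_pos)
      qed
    qed
    have "u * snd x \<le> u" using u xs by (simp add: mult_left_le)
    moreover have "v * snd y \<le> v" using v ys by (simp add: mult_left_le)
    ultimately have le1: "u * snd x + v * snd y \<le> 1" using uv by linarith
    show "u *\<^sub>R x + v *\<^sub>R y \<in> ZZo" unfolding ZZo_def
      using pos[OF xs(1) ys(1)] pos[OF xs(2) ys(2)] le1 by simp
  qed
qed

lemma Eset_open:
  assumes R1: "classical R1" and R2: "classical R2"
  shows "open (Eset R1 R2)"
  unfolding open_dist
proof (intro ballI)
  fix z assume "z \<in> Eset R1 R2"
  then obtain x where x: "x \<in> ZZ" "zlt x z" "\<not> R2 z x" "\<not> R1 x z" unfolding Eset_def by blast
  obtain e1 where e1: "e1 > 0" "\<forall>y. dist y z < e1 \<longrightarrow> \<not> R2 y x" using cl_open1[OF R2 x(1) x(3)] by blast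
  obtain e2 where e2: "e2 > 0" "\<forall>y. dist y z < e2 \<longrightarrow> \<not> R1 x y" using cl_open2[OF R1 x(1) x(4)] by blast
  define e where "e = min (min e1 e2) (min (fst z - fst x) (snd z - snd x))"
  have "e > 0" using e1 e2 x(2) unfolding e_def zlt_def by auto
  moreover have "\<forall>y. dist y z < e \<longrightarrow> y \<in> Eset R1 R2"
  proof (intro allI impI)
    fix y assume d: "dist y z < e"
    have "dist (fst y) (fst z) \<le> dist y z" "dist (snd y) (snd z) \<le> dist y z"
      by (rule dist_fst_le, rule dist_snd_le)
    then have "\<bar>fst y - fst z\<bar> < fst z - fst x" "\<bar>snd y - snd z\<bar> < snd z - snd x"
      using d unfolding e_def dist_real_def by auto
    then have "zlt x y" unfolding zlt_def by auto
    moreover have "dist y z < e1" "dist y z < e2" using d unfolding e_def by auto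
    ultimately show "y \<in> Eset R1 R2" unfolding Eset_def using e1 e2 x(1) by blast
  qed
  ultimately show "\<exists>e>0. \<forall>y. dist y z < e \<longrightarrow> y \<in> Eset R1 R2" by blast
qed

lemma Eset_cover:
  assumes R1: "classical R1" and R2: "classical R2" and sc: "scp R1 R2" and z: "z \<in> ZZo"
  shows "z \<in> Eset R1 R2 \<union> Eset R2 R1"
proof -
  obtain tz qz where zz: "z = (tz,qz)" by (cases z)
  have zb: "0 < tz" "0 < qz" "qz \<le> 1" using z zz unfolding ZZo_def by auto
  have zZ: "z \<in> ZZ" using ZZo_ZZ[OF z] .
  have p: "(0,qz) \<in> ZZ" using zb by (simp add: ZZ_def)
  have "\<not> R1 z (0,qz)" using cl_dom[OF R1 p zZ] zz zb by auto
  then obtain e where e: "e > 0" "\<forall>y. dist y (0,qz) < e \<longrightarrow> \<not> R1 z y" using cl_open2[OF R1 zZ] by blast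
  define d where "d = min (e/2) (qz/2)"
  have d0: "0 < d" unfolding d_def using e zb by simp
  have d1: "d \<le> e/2" unfolding d_def by (rule min.cobounded1)
  have d2: "d \<le> qz/2" unfolding d_def by (rule min.cobounded2)
  define q where "q = qz - d"
  have qq0: "0 < q" "q < qz" unfolding q_def using d0 d1 d2 e by auto
  have "dist ((0::real),q) (0,qz) = \<bar>q - qz\<bar>" by (rule dist_q)
  then have "dist ((0::real),q) (0,qz) < e" unfolding q_def using d0 d1 d2 e by auto
  note qq = qq0 this
  have "\<not> R1 z (0,q)" using e qq by blast
  then have "q \<in> Sset R1 R2 z" unfolding Sset_def using qq zz by auto
  then have "q \<in> eset R1 R2 z \<union> eset R2 R1 z" using Sset_cover[OF R1 R2 zZ sc] by blast
  then show ?thesis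
  proof
    assume "q \<in> eset R1 R2 z"
    then obtain t where t: "0 \<le> t" "t < fst z" "0 < q" "q < snd z" "\<not> R2 z (t,q)" "\<not> R1 (t,q) z"
      unfolding eset_def by blast
    have "(t,q) \<in> ZZ" using t zb zz by (simp add: ZZ_def)
    then have "z \<in> Eset R1 R2" using t unfolding Eset_def zlt_def by (intro CollectI bexI[of _ "(t,q)"]) auto
    then show ?thesis by blast
  next
    assume "q \<in> eset R2 R1 z"
    then obtain t where t: "0 \<le> t" "t < fst z" "0 < q" "q < snd z" "\<not> R1 z (t,q)" "\<not> R2 (t,q) z"
      unfolding eset_def by blast
    have "(t,q) \<in> ZZ" using t zb zz by (simp add: ZZ_def)
    then have "z \<in> Eset R2 R1" using t unfolding Eset_def zlt_def by (intro CollectI bexI[of _ "(t,q)"]) auto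
    then show ?thesis by blast
  qed
qed

lemma empty_prec:
  assumes R1: "classical R1" and R2: "classical R2" and em: "Eset R1 R2 \<inter> ZZo = {}" and ne: "R1 \<noteq> R2"
  shows "prec R1 R2"
  unfolding prec_def
proof (intro conjI ne ballI subsetI)
  fix z x assume z: "z \<in> ZZ" and xin: "x \<in> zbox z \<inter> ZZ \<inter> {x. R2 x z}"
  have xZ: "x \<in> ZZ" and r2: "R2 x z" and xb: "x = z \<or> zlt x z" using xin unfolding zbox_def by auto
  have "R1 x z"
  proof (cases "x = z")
    case True then show ?thesis using cl_refl[OF R1 z] by simp
  next
    case False
    then have lt: "zlt x z" using xb by blast
    show ?thesis
    proof (rule ccontr)
      assume n: "\<not> R1 x z"
      obtain a b where ab: "x = (a,b)" by (cases x)
      have abz: "a < fst z" "b < snd z" "0 \<le> a" "0 \<le> b" using lt xZ ab unfolding zlt_def by (auto simp: ZZ_def)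
      have q1: "snd z \<le> 1" using z by (auto simp: ZZ_def)
      obtain e where e: "e > 0" "\<forall>y. dist y x < e \<longrightarrow> \<not> R1 y z" using cl_open1[OF R1 z n] by blast
      define d where "d = min (e/2) ((snd z - b)/2)"
      have d0: "0 < d" unfolding d_def using e abz by simp
      have d1: "d \<le> e/2" unfolding d_def by (rule min.cobounded1)
      have d2: "d \<le> (snd z - b)/2" unfolding d_def by (rule min.cobounded2)
      define q where "q = b + d"
      have qq: "b < q" "q < snd z" "dist (a,q) x < e" unfolding q_def using d0 d1 d2 e ab by (auto simp: dist_q)
      have pz: "(a,q) \<in> ZZ" using qq abz q1 by (auto simp: ZZ_def)
      have n1: "\<not> R1 (a,q) z" using e qq by blast
      have "\<not> R2 x (a,q)" using cl_dom[OF R2 pz xZ[unfolded ab]] qq ab by auto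
      then have n2: "\<not> R2 z (a,q)" using cl_trans[OF R2 r2] by blast
      have "z \<in> Eset R1 R2" unfolding Eset_def zlt_def using pz n1 n2 abz qq by (intro CollectI bexI[of _ "(a,q)"]) auto
      moreover have "z \<in> ZZo" using abz q1 unfolding ZZo_def by auto
      ultimately show False using em by blast
    qed
  qed
  then show "x \<in> zbox z \<inter> ZZ \<inter> {x. R1 x z}" using xin by blast
qed

lemma prec_total:
  assumes R1: "classical R1" and R2: "classical R2" and sc: "single_crossing R1 R2" and ne: "R1 \<noteq> R2"
  shows "prec R1 R2 \<or> prec R2 R1"
proof -
  have scp: "scp R1 R2" using sc_scp[OF R1 R2 sc] .
  have disj: "Eset R1 R2 \<inter> Eset R2 R1 \<inter> ZZo = {}"
  proof (rule ccontr)
    assume "Eset R1 R2 \<inter> Eset R2 R1 \<inter> ZZo \<noteq> {}"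
    then obtain z where z: "z \<in> Eset R1 R2" "z \<in> Eset R2 R1" "z \<in> ZZo" by blast
    obtain x where x: "x \<in> ZZ" "zlt x z" "\<not> R2 z x" "\<not> R1 x z" using z(1) unfolding Eset_def by blast
    obtain y where y: "y \<in> ZZ" "zlt y z" "\<not> R1 z y" "\<not> R2 y z" using z(2) unfolding Eset_def by blast
    show False using local_lemma[OF R1 R2 ZZo_ZZ[OF z(3)] scp x y] .
  qed
  have cov: "ZZo \<subseteq> Eset R1 R2 \<union> Eset R2 R1" using Eset_cover[OF R1 R2 scp] by blast
  have "Eset R1 R2 \<inter> ZZo = {} \<or> Eset R2 R1 \<inter> ZZo = {}"
    using connectedD[OF ZZo_conn Eset_open[OF R1 R2] Eset_open[OF R2 R1] disj cov] .
  then show ?thesis using empty_prec[OF R1 R2 _ ne] empty_prec[OF R2 R1 _ ne[symmetric]] by blast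
qed



lemma interval_sub: "pref_interval D lo hi \<subseteq> D"
  unfolding pref_interval_def by auto

lemma interval_total:
  assumes dom: "rich_sc_domain D" and a: "a \<in> pref_interval D lo hi" and b: "b \<in> pref_interval D lo hi"
    and ne: "a \<noteq> b"
  shows "prec a b \<or> prec b a"
proof -
  have aD: "a \<in> D" and bD: "b \<in> D" using a b interval_sub by auto
  have "classical a" "classical b" "single_crossing a b" using dom aD bD ne unfolding rich_sc_domain_def by auto
  then show ?thesis using prec_total ne by blast
qed

lemma downset_borel:
  assumes tot: "\<forall>a\<in>I. \<forall>b\<in>I. a \<noteq> b \<longrightarrow> prec a b \<or> prec b a"
    and sub: "Ds \<subseteq> I" and down: "\<forall>b\<in>Ds. \<forall>a\<in>I. prec a b \<longrightarrow> a \<in> Ds"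
  shows "Ds \<in> borel_sets_on I"
proof -
  define G where "G = insert I ({{R\<in>I. prec a R} | a. a \<in> I} \<union> {{R\<in>I. prec R a} | a. a \<in> I})"
  have op: "\<And>U. generate_topology_on G U \<Longrightarrow> U \<in> borel_sets_on I"
    unfolding borel_sets_on_def order_topology_on_def G_def
    by (rule sigma_sets.Basic) (simp add: openin_topology_generated_by_iff)
  show ?thesis
  proof (cases "\<exists>a\<in>Ds. \<forall>b\<in>Ds. \<not> prec a b")
    case True
    then obtain a where a: "a \<in> Ds" "\<forall>b\<in>Ds. \<not> prec a b" by blast
    have aI: "a \<in> I" using a sub by auto
    have eq: "Ds = I - {R\<in>I. prec a R}"
    proof
      show "Ds \<subseteq> I - {R\<in>I. prec a R}" using a sub by auto
      show "I - {R\<in>I. prec a R} \<subseteq> Ds"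
      proof
        fix b assume b: "b \<in> I - {R\<in>I. prec a R}"
        show "b \<in> Ds"
        proof (cases "b = a")
          case True then show ?thesis using a by simp
        next
          case False
          then have "prec b a" using tot aI b by blast
          then show ?thesis using down a b by blast
        qed
      qed
    qed
    have "generate_topology_on G {R\<in>I. prec a R}"
      unfolding G_def by (rule generate_topology_on.Basis, rule insertI2, rule UnI1) (use aI in blast)
    then have "{R\<in>I. prec a R} \<in> borel_sets_on I" by (rule op)
    then have "I - {R\<in>I. prec a R} \<in> borel_sets_on I"
      unfolding borel_sets_on_def by (rule sigma_sets.Compl)
    then show ?thesis using eq by simp
  next
    case False
    then have nm: "\<forall>a\<in>Ds. \<exists>b\<in>Ds. prec a b" by blast
    have eq: "Ds = \<Union>{{R\<in>I. prec R a} | a. a \<in> Ds}"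
    proof
      show "Ds \<subseteq> \<Union>{{R\<in>I. prec R a} | a. a \<in> Ds}"
      proof
        fix x assume x: "x \<in> Ds"
        then obtain b where "b \<in> Ds" "prec x b" using nm by blast
        then show "x \<in> \<Union>{{R\<in>I. prec R a} | a. a \<in> Ds}" using x sub by blast
      qed
      show "\<Union>{{R\<in>I. prec R a} | a. a \<in> Ds} \<subseteq> Ds"
      proof
        fix x assume "x \<in> \<Union>{{R\<in>I. prec R a} | a. a \<in> Ds}"
        then obtain a where "a \<in> Ds" "x \<in> I" "prec x a" by blast
        then show "x \<in> Ds" using down by blast
      qed
    qed
    have "generate_topology_on G (\<Union>{{R\<in>I. prec R a} | a. a \<in> Ds})"
    proof (rule generate_topology_on.UN)
      fix k assume "k \<in> {{R\<in>I. prec R a} | a. a \<in> Ds}"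
      then obtain a where aD: "a \<in> Ds" and k: "k = {R\<in>I. prec R a}" by blast
      show "generate_topology_on G k"
        unfolding G_def k by (rule generate_topology_on.Basis, rule insertI2, rule UnI2) (use aD sub in blast)
    qed
    then show ?thesis using op eq by simp
  qed
qed

lemma XY_borel:
  assumes dom: "rich_sc_domain D"
  shows "{R\<in>pref_interval D lo hi. R x y} \<in> borel_sets_on (pref_interval D lo hi)"
proof -
  define I where "I = pref_interval D lo hi"
  have cls: "\<And>R. R \<in> I \<Longrightarrow> classical R" using dom interval_sub unfolding I_def rich_sc_domain_def by blast
  have tot: "\<forall>a\<in>I. \<forall>b\<in>I. a \<noteq> b \<longrightarrow> prec a b \<or> prec b a" using interval_total[OF dom] unfolding I_def by blast
  have emp: "{} \<in> borel_sets_on I" unfolding borel_sets_on_def by (rule sigma_sets.Empty)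
  have whole: "I \<in> borel_sets_on I"
  proof -
    have "I - {} \<in> borel_sets_on I" using emp unfolding borel_sets_on_def by (rule sigma_sets.Compl)
    then show ?thesis by simp
  qed
  have "{R\<in>I. R x y} \<in> borel_sets_on I"
  proof (cases "x \<in> ZZ \<and> y \<in> ZZ")
    case False
    have "\<And>R. R \<in> I \<Longrightarrow> \<not> R x y" using False cl_ZZ cls by blast
    then have "{R\<in>I. R x y} = {}" by blast
    then show ?thesis using emp by metis
  next
    case True
    then have x: "x \<in> ZZ" and y: "y \<in> ZZ" by auto
    show ?thesis
    proof (cases "zlt x y")
      case True
      show ?thesis
      proof (rule downset_borel[OF tot])
        show "{R\<in>I. R x y} \<subseteq> I" by auto
        show "\<forall>b\<in>{R\<in>I. R x y}. \<forall>a\<in>I. prec a b \<longrightarrow> a \<in> {R\<in>I. R x y}"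
        proof (intro ballI impI)
          fix b a assume b: "b \<in> {R\<in>I. R x y}" and a: "a \<in> I" and p: "prec a b"
          have "x \<in> zbox y \<inter> ZZ \<inter> {w. b w y}" using b x True unfolding zbox_def by auto
          then have "a x y" using p y unfolding prec_def by blast
          then show "a \<in> {R\<in>I. R x y}" using a by blast
        qed
      qed
    next
      case nxy: False
      show ?thesis
      proof (cases "zlt y x")
        case True
        have "{R\<in>I. \<not> R x y} \<in> borel_sets_on I"
        proof (rule downset_borel[OF tot])
          show "{R\<in>I. \<not> R x y} \<subseteq> I" by auto
          show "\<forall>b\<in>{R\<in>I. \<not> R x y}. \<forall>a\<in>I. prec a b \<longrightarrow> a \<in> {R\<in>I. \<not> R x y}"
          proof (intro ballI impI)
            fix b a assume b: "b \<in> {R\<in>I. \<not> R x y}" and a: "a \<in> I" and p: "prec a b"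
            have clb: "classical b" and cla: "classical a" using b a cls by auto
            have nb: "\<not> b x y" using b by auto
            have "\<not> a x y"
            proof
              assume axy: "a x y"
              obtain c d where yc: "y = (c,d)" by (cases y)
              have cd: "c < fst x" "d < snd x" "0 \<le> c" "0 \<le> d" "d \<le> 1"
                using True y yc unfolding zlt_def by (auto simp: ZZ_def)
              obtain e where e: "e > 0" "\<forall>w. dist w y < e \<longrightarrow> \<not> b x w" using cl_open2[OF clb x nb] by blast
              define dd where "dd = min (e/2) ((fst x - c)/2)"
              have d0: "0 < dd" unfolding dd_def using e cd by simp
              have d1: "dd \<le> e/2" unfolding dd_def by (rule min.cobounded1)
              have d2: "dd \<le> (fst x - c)/2" unfolding dd_def by (rule min.cobounded2)
              have "dist (c + dd, d) (c, d) = \<bar>(c + dd) - c\<bar>" by (rule dist_t)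
              then have "dist (c + dd, d) y < e" using yc d0 d1 by auto
              then have nb2: "\<not> b x (c + dd, d)" using e by blast
              have y'Z: "(c + dd, d) \<in> ZZ" using cd d0 by (simp add: ZZ_def)
              have "b (c + dd, d) x" using cl_total[OF clb y'Z x] nb2 by blast
              moreover have "zlt (c + dd, d) x" using cd d2 d0 unfolding zlt_def by auto
              ultimately have "(c + dd, d) \<in> zbox x \<inter> ZZ \<inter> {w. b w x}" using y'Z unfolding zbox_def by auto
              then have "a (c + dd, d) x" using p x unfolding prec_def by blast
              then have "a (c + dd, d) y" using cl_trans[OF cla _ axy] by blast
              then show False using cl_t[OF cla, of d c "c + dd"] cd d0 yc by auto
            qed
            then show "a \<in> {R\<in>I. \<not> R x y}" using a by blast
          qed
        qed
        then have "I - {R\<in>I. \<not> R x y} \<in> borel_sets_on I"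
          unfolding borel_sets_on_def by (rule sigma_sets.Compl)
        moreover have "I - {R\<in>I. \<not> R x y} = {R\<in>I. R x y}" by auto
        ultimately show ?thesis by simp
      next
        case nyx: False
        show ?thesis
        proof (cases "fst x \<le> fst y \<and> snd y \<le> snd x")
          case True
          have "\<And>R. R \<in> I \<Longrightarrow> R x y" using cl_dom[OF cls x y] True by blast
          then have "{R\<in>I. R x y} = I" by blast
          then show ?thesis using whole by metis
        next
          case False
          then have h: "fst y \<le> fst x" "snd x \<le> snd y" "y \<noteq> x"
            using nxy nyx unfolding zlt_def by auto
          have "\<And>R. R \<in> I \<Longrightarrow> \<not> R x y" using cl_dom[OF cls y x] h by blast
          then have "{R\<in>I. R x y} = {}" by blast
          then show ?thesis using emp by metis
        qed
      qed
    qed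
  qed
  then show ?thesis unfolding I_def .
qed



primrec sel :: "pref \<Rightarrow> (real \<times> real) set \<Rightarrow> (real \<times> real) list \<Rightarrow> real \<times> real" where
  "sel R N [] = (0,0)"
| "sel R N (a # L) = (if (\<forall>m\<in>N. R a m) then a else sel R N L)"

lemma sel_prop: "(\<exists>a\<in>set L. \<forall>m\<in>N. R a m) \<Longrightarrow> sel R N L \<in> set L \<and> (\<forall>m\<in>N. R (sel R N L) m)"
  by (induction L) auto

lemma exists_max:
  assumes R: "classical R"
  shows "L \<noteq> [] \<Longrightarrow> set L \<subseteq> ZZ \<Longrightarrow> \<exists>a\<in>set L. \<forall>m\<in>set L. R a m"
proof (induction L)
  case Nil then show ?case by simp
next
  case (Cons a L)
  show ?case
  proof (cases "L = []")
    case True then show ?thesis using cl_refl[OF R] Cons.prems by auto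
  next
    case False
    then obtain b where b: "b \<in> set L" "\<forall>m\<in>set L. R b m" using Cons by auto
    have aZ: "a \<in> ZZ" and bZ: "b \<in> ZZ" using Cons.prems b by auto
    show ?thesis
    proof (cases "R a b")
      case True
      have "\<forall>m\<in>set (a # L). R a m"
      proof
        fix m assume "m \<in> set (a # L)"
        then have "m = a \<or> m \<in> set L" by simp
        then show "R a m"
        proof
          assume "m = a" then show "R a m" using cl_refl[OF R aZ] by simp
        next
          assume "m \<in> set L" then have "R b m" using b by blast
          then show "R a m" using cl_trans[OF R True] by blast
        qed
      qed
      then show ?thesis by auto
    next
      case False
      then have "R b a" using cl_total[OF R aZ bZ] by blast
      then have "\<forall>m\<in>set (a # L). R b m" using b by auto
      then show ?thesis using b by auto
    qed
  qed
qed

lemma sel_meas: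
  assumes "\<forall>a\<in>set L. {R\<in>space M. \<forall>m\<in>N. R a m} \<in> sets M"
  shows "(\<lambda>R. fst (sel R N L)) \<in> borel_measurable M"
  using assms
proof (induction L)
  case Nil then show ?case by simp
next
  case (Cons a L)
  have "(\<lambda>R. if (\<forall>m\<in>N. R a m) then fst a else fst (sel R N L)) \<in> borel_measurable M"
    by (rule measurable_If) (use Cons in auto)
  moreover have "(\<lambda>R. fst (sel R N (a # L))) = (\<lambda>R. if (\<forall>m\<in>N. R a m) then fst a else fst (sel R N L))"
    by (auto simp: fun_eq_iff)
  ultimately show ?case by simp
qed



theorem mainTheorem15:
  fixes D :: "pref set" and lo hi :: pref and \<mu> :: "pref measure"
    and Fc :: "pref \<Rightarrow> real \<times> real"
  defines "I \<equiv> pref_interval D lo hi"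
  assumes dom: "rich_sc_domain D" and lo: "lo \<in> D" and hi: "hi \<in> D"
    and prob: "prob_space \<mu>" and space: "space \<mu> = I"
    and sets: "sets \<mu> = borel_sets_on I"
    and nontriv: "nontrivial_measure I \<mu>" and cont: "continuous_measure \<mu>"
    and Fc_mech: "mechanism I Fc" and Fc_sp: "strategy_proof I Fc"
    and Fc_ir: "individually_rational I Fc"
    and Fc_countable: "countable (Fc ` I)" and Fc_closed: "closed (Fc ` I)"
    and Fc_limpts: "finite {x. x islimpt (Fc ` I)}"
    and better: "\<And>F. finite_sp_ir I F \<Longrightarrow> revenue \<mu> F < revenue \<mu> Fc"
  shows "(\<forall>\<epsilon>>0. \<exists>F\<epsilon>. finite_sp_ir I F\<epsilon> \<and> revenue \<mu> Fc - revenue \<mu> F\<epsilon> \<le> \<epsilon>)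
       \<and> (\<forall>Fs. finite_sp_ir I Fs \<and> (\<forall>F. finite_sp_ir I F \<longrightarrow> revenue \<mu> F \<le> revenue \<mu> Fs)
              \<longrightarrow> revenue \<mu> Fc \<le> revenue \<mu> Fs)"
proof -
  interpret P: prob_space \<mu> by (rule prob)
  have cls: "\<And>R. R \<in> I \<Longrightarrow> classical R"
    using dom interval_sub unfolding I_def rich_sc_domain_def by blast
  have setsXY: "\<And>x y. {R\<in>space \<mu>. R x y} \<in> sets \<mu>"
  proof -
    fix x y
    have "{R\<in>I. R x y} \<in> borel_sets_on I" unfolding I_def by (rule XY_borel[OF dom])
    then show "{R\<in>space \<mu>. R x y} \<in> sets \<mu>" unfolding space sets .
  qed
  have zZ: "((0::real),(0::real)) \<in> ZZ" by (simp add: ZZ_def)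
  have FcZ: "\<And>R. R \<in> I \<Longrightarrow> Fc R \<in> ZZ" using Fc_mech unfolding mechanism_def by blast
  have FcSP: "\<And>R R'. R \<in> I \<Longrightarrow> R' \<in> I \<Longrightarrow> R (Fc R) (Fc R')" using Fc_sp unfolding strategy_proof_def by blast
  have FcIR: "\<And>R. R \<in> I \<Longrightarrow> R (Fc R) (0,0)" using Fc_ir unfolding individually_rational_def by blast
  have fin0: "finite ((\<lambda>R::pref. ((0::real),(0::real))) ` I)"
  proof (rule finite_subset[of _ "{(0,0)}"])
    show "(\<lambda>R::pref. ((0::real),(0::real))) ` I \<subseteq> {(0,0)}" by blast
  qed simp
  have "finite_sp_ir I (\<lambda>R. (0,0))"
    unfolding finite_sp_ir_def mechanism_def strategy_proof_def individually_rational_def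
    using zZ cl_refl[OF cls zZ] fin0 by blast
  then have "revenue \<mu> (\<lambda>R. (0,0)) < revenue \<mu> Fc" by (rule better)
  then have rpos: "0 < revenue \<mu> Fc" unfolding revenue_def by simp
  have intFc: "integrable \<mu> (\<lambda>R. fst (Fc R))"
  proof (rule ccontr)
    assume "\<not> integrable \<mu> (\<lambda>R. fst (Fc R))"
    then have "revenue \<mu> Fc = 0" unfolding revenue_def by (rule not_integrable_integral_eq)
    then show False using rpos by simp
  qed
  have measFc: "(\<lambda>R. fst (Fc R)) \<in> borel_measurable \<mu>" using intFc by (rule borel_measurable_integrable)
  define M where "M = Fc ` I"
  have Minf: "infinite M"
  proof
    assume "finite M"
    then have "finite_sp_ir I Fc" using Fc_mech Fc_sp Fc_ir unfolding finite_sp_ir_def M_def by blast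
    then have "revenue \<mu> Fc < revenue \<mu> Fc" by (rule better)
    then show False by simp
  qed
  then have Mne: "M \<noteq> {}" by auto
  have MZ: "M \<subseteq> ZZ" using FcZ unfolding M_def by auto
  have inj: "inj_on fst M"
  proof (rule inj_onI)
    fix m1 m2 assume m1: "m1 \<in> M" and m2: "m2 \<in> M" and f: "fst m1 = fst m2"
    obtain R1 where R1: "R1 \<in> I" "m1 = Fc R1" using m1 unfolding M_def by blast
    obtain R2 where R2: "R2 \<in> I" "m2 = Fc R2" using m2 unfolding M_def by blast
    have z1: "m1 \<in> ZZ" and z2: "m2 \<in> ZZ" using m1 m2 MZ by auto
    show "m1 = m2"
    proof (rule ccontr)
      assume ne: "m1 \<noteq> m2"
      then have "snd m1 \<noteq> snd m2" using f by (simp add: prod_eq_iff)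
      then show False
      proof (cases "snd m1 < snd m2")
        case True
        have "\<not> R1 m1 m2" using cl_dom[OF cls[OF R1(1)] z2 z1] f True ne by auto
        then show False using FcSP[OF R1(1) R2(1)] R1 R2 by simp
      next
        case False
        then have "snd m2 < snd m1" using \<open>snd m1 \<noteq> snd m2\<close> by auto
        have "\<not> R2 m2 m1" using cl_dom[OF cls[OF R2(1)] z1 z2] f \<open>snd m2 < snd m1\<close> ne by auto
        then show False using FcSP[OF R2(1) R1(1)] R1 R2 by simp
      qed
    qed
  qed
  define e where "e = from_nat_into M"
  have eM: "\<And>n. e n \<in> M" unfolding e_def using from_nat_into[OF Mne] .
  have cM: "countable M" unfolding M_def by (rule Fc_countable)
  have esurj: "\<And>m. m \<in> M \<Longrightarrow> \<exists>n. e n = m" unfolding e_def by (rule from_nat_into_surj[OF cM])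
  define L where "L n = ((0::real),(0::real)) # map e [0..<Suc n]" for n
  define N where "N n = set (L n)" for n
  define F where "F n R = (if Fc R \<in> N n then Fc R else sel R (N n) (L n))" for n R
  have NZ: "\<And>n. N n \<subseteq> ZZ" unfolding N_def L_def using zZ eM MZ by auto
  have finN: "\<And>n. finite (N n)" unfolding N_def by simp
  have N0: "\<And>n. (0,0) \<in> N n" unfolding N_def L_def by simp
  have NM: "\<And>n m. m \<in> N n \<Longrightarrow> m = (0,0) \<or> m \<in> M" unfolding N_def L_def using eM by auto
  have Fbest: "\<And>n R. R \<in> I \<Longrightarrow> F n R \<in> N n \<and> (\<forall>m\<in>N n. R (F n R) m)"
  proof -
    fix n R assume R: "R \<in> I"
    show "F n R \<in> N n \<and> (\<forall>m\<in>N n. R (F n R) m)"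
    proof (cases "Fc R \<in> N n")
      case True
      have "\<forall>m\<in>N n. R (Fc R) m"
      proof
        fix m assume "m \<in> N n"
        then have "m = (0,0) \<or> m \<in> M" by (rule NM)
        then show "R (Fc R) m"
        proof
          assume "m = (0,0)" then show ?thesis using FcIR[OF R] by simp
        next
          assume "m \<in> M"
          then obtain R' where "R' \<in> I" "m = Fc R'" unfolding M_def by blast
          then show ?thesis using FcSP[OF R] by simp
        qed
      qed
      then show ?thesis using True unfolding F_def by simp
    next
      case False
      have "\<exists>a\<in>set (L n). \<forall>m\<in>set (L n). R a m"
        by (rule exists_max[OF cls[OF R]]) (use NZ in \<open>auto simp: L_def N_def\<close>)
      then have "sel R (N n) (L n) \<in> set (L n) \<and> (\<forall>m\<in>N n. R (sel R (N n) (L n)) m)"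
        unfolding N_def by (rule sel_prop)
      then show ?thesis using False unfolding F_def N_def by simp
    qed
  qed
  have Fsp: "\<And>n. finite_sp_ir I (F n)"
  proof -
    fix n
    have "mechanism I (F n)" unfolding mechanism_def using Fbest NZ by blast
    moreover have "strategy_proof I (F n)" unfolding strategy_proof_def using Fbest by blast
    moreover have "individually_rational I (F n)" unfolding individually_rational_def using Fbest N0 by blast
    moreover have "finite (F n ` I)" using finite_subset[OF _ finN[of n]] Fbest by blast
    ultimately show "finite_sp_ir I (F n)" unfolding finite_sp_ir_def by blast
  qed
  have Fmeas: "\<And>n. (\<lambda>R. fst (F n R)) \<in> borel_measurable \<mu>"
  proof -
    fix n
    have s1: "(\<lambda>R. fst (sel R (N n) (L n))) \<in> borel_measurable \<mu>"
    proof (rule sel_meas, intro ballI)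
      fix a assume "a \<in> set (L n)"
      show "{R\<in>space \<mu>. \<forall>m\<in>N n. R a m} \<in> sets \<mu>"
        by (rule sets.sets_Collect_finite_All) (use setsXY finN in auto)
    qed
    have A: "{R. Fc R \<in> N n} \<inter> space \<mu> = (\<lambda>R. fst (Fc R)) -` (fst ` (N n \<inter> M)) \<inter> space \<mu>"
    proof
      show "{R. Fc R \<in> N n} \<inter> space \<mu> \<subseteq> (\<lambda>R. fst (Fc R)) -` (fst ` (N n \<inter> M)) \<inter> space \<mu>"
        using space unfolding M_def by auto
      show "(\<lambda>R. fst (Fc R)) -` (fst ` (N n \<inter> M)) \<inter> space \<mu> \<subseteq> {R. Fc R \<in> N n} \<inter> space \<mu>"
      proof
        fix R assume "R \<in> (\<lambda>R. fst (Fc R)) -` (fst ` (N n \<inter> M)) \<inter> space \<mu>"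
        then obtain m where m: "m \<in> N n" "m \<in> M" "fst (Fc R) = fst m" and R: "R \<in> I" using space by auto
        have "Fc R \<in> M" using R unfolding M_def by blast
        then have "Fc R = m" using inj m unfolding inj_on_def by blast
        then show "R \<in> {R. Fc R \<in> N n} \<inter> space \<mu>" using m R space by auto
      qed
    qed
    have "fst ` (N n \<inter> M) \<in> sets borel" using finN[of n] by (intro borel_closed finite_imp_closed) auto
    then have "{R. Fc R \<in> N n} \<inter> space \<mu> \<in> sets \<mu>" unfolding A using measurable_sets[OF measFc] by blast
    then have "(\<lambda>R. if R \<in> {R. Fc R \<in> N n} then fst (Fc R) else fst (sel R (N n) (L n))) \<in> borel_measurable \<mu>"
      by (rule measurable_If_set[OF measFc s1])
    moreover have "(\<lambda>R. fst (F n R)) = (\<lambda>R. if R \<in> {R. Fc R \<in> N n} then fst (Fc R) else fst (sel R (N n) (L n)))"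
      unfolding F_def by (auto simp: fun_eq_iff)
    ultimately show "(\<lambda>R. fst (F n R)) \<in> borel_measurable \<mu>" by simp
  qed
  have Fint: "\<And>n. integrable \<mu> (\<lambda>R. fst (F n R))"
  proof -
    fix n
    have "AE R in \<mu>. norm (fst (F n R)) \<le> (\<Sum>m\<in>N n. \<bar>fst m\<bar>)"
    proof (rule AE_I2)
      fix R assume "R \<in> space \<mu>"
      then have "F n R \<in> N n" using Fbest space by auto
      then show "norm (fst (F n R)) \<le> (\<Sum>m\<in>N n. \<bar>fst m\<bar>)"
        using member_le_sum[of "F n R" "N n" "\<lambda>m. \<bar>fst m\<bar>"] finN by auto
    qed
    then show "integrable \<mu> (\<lambda>R. fst (F n R))" by (rule P.integrable_const_bound[OF _ Fmeas])
  qed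
  have Fnn: "\<And>n R. R \<in> space \<mu> \<Longrightarrow> 0 \<le> fst (F n R)"
  proof -
    fix n R assume "R \<in> space \<mu>"
    then have "F n R \<in> N n" using Fbest space by blast
    then have "F n R \<in> ZZ" using NZ by blast
    then show "0 \<le> fst (F n R)" unfolding ZZ_def by blast
  qed
  have Fcnn: "\<And>R. R \<in> space \<mu> \<Longrightarrow> 0 \<le> fst (Fc R)"
  proof -
    fix R assume "R \<in> space \<mu>"
    then have "Fc R \<in> ZZ" using FcZ space by blast
    then show "0 \<le> fst (Fc R)" unfolding ZZ_def by blast
  qed
  have conv: "\<And>R. R \<in> space \<mu> \<Longrightarrow> \<exists>k. \<forall>n\<ge>k. F n R = Fc R"
  proof -
    fix R assume "R \<in> space \<mu>"
    then have "Fc R \<in> M" using space unfolding M_def by auto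
    then obtain k where k: "e k = Fc R" using esurj by blast
    have "\<forall>n\<ge>k. F n R = Fc R"
    proof (intro allI impI)
      fix n assume "k \<le> n"
      then have "k \<in> {0..<Suc n}" by simp
      then have "e k \<in> e ` {0..<Suc n}" by (rule imageI)
      then have "Fc R \<in> N n" unfolding N_def L_def using k by (metis (no_types) insert_iff list.set(2) set_map set_upt)
      then show "F n R = Fc R" unfolding F_def by simp
    qed
    then show "\<exists>k. \<forall>n\<ge>k. F n R = Fc R" by blast
  qed
  have eqFc: "(\<integral>\<^sup>+R. ennreal (fst (Fc R)) \<partial>\<mu>) = ennreal (revenue \<mu> Fc)"
    unfolding revenue_def by (rule nn_integral_eq_integral[OF intFc]) (use Fcnn in auto)
  have eqF: "\<And>n. (\<integral>\<^sup>+R. ennreal (fst (F n R)) \<partial>\<mu>) = ennreal (revenue \<mu> (F n))"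
    unfolding revenue_def by (rule nn_integral_eq_integral[OF Fint]) (use Fnn in auto)
  have lim: "\<And>R. R \<in> space \<mu> \<Longrightarrow> liminf (\<lambda>n. ennreal (fst (F n R))) = ennreal (fst (Fc R))"
  proof -
    fix R assume R: "R \<in> space \<mu>"
    obtain k where k: "\<forall>n\<ge>k. F n R = Fc R" using conv[OF R] by blast
    have "eventually (\<lambda>n. ennreal (fst (F n R)) = ennreal (fst (Fc R))) sequentially"
      unfolding eventually_sequentially using k by (intro exI[of _ k]) simp
    then have "(\<lambda>n. ennreal (fst (F n R))) \<longlonglongrightarrow> ennreal (fst (Fc R))" by (rule tendsto_eventually)
    then show "liminf (\<lambda>n. ennreal (fst (F n R))) = ennreal (fst (Fc R))"
      by (rule lim_imp_Liminf[OF trivial_limit_sequentially])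
  qed
  have "ennreal (revenue \<mu> Fc) = (\<integral>\<^sup>+R. liminf (\<lambda>n. ennreal (fst (F n R))) \<partial>\<mu>)"
    unfolding eqFc[symmetric] by (rule nn_integral_cong) (simp add: lim)
  also have "\<dots> \<le> liminf (\<lambda>n. \<integral>\<^sup>+R. ennreal (fst (F n R)) \<partial>\<mu>)"
    by (rule nn_integral_liminf) (use Fmeas in measurable)
  also have "\<dots> = liminf (\<lambda>n. ennreal (revenue \<mu> (F n)))" using eqF by simp
  finally have fatou: "ennreal (revenue \<mu> Fc) \<le> liminf (\<lambda>n. ennreal (revenue \<mu> (F n)))" .
  have part1: "\<forall>\<epsilon>>0. \<exists>F\<epsilon>. finite_sp_ir I F\<epsilon> \<and> revenue \<mu> Fc - revenue \<mu> F\<epsilon> \<le> \<epsilon>"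
  proof (intro allI impI)
    fix \<epsilon> :: real assume eps: "\<epsilon> > 0"
    show "\<exists>F\<epsilon>. finite_sp_ir I F\<epsilon> \<and> revenue \<mu> Fc - revenue \<mu> F\<epsilon> \<le> \<epsilon>"
    proof (rule ccontr)
      assume nt: "\<not> ?thesis"
      have lt: "\<And>n. revenue \<mu> (F n) < revenue \<mu> Fc - \<epsilon>"
      proof -
        fix n
        have "\<not> (revenue \<mu> Fc - revenue \<mu> (F n) \<le> \<epsilon>)" using nt Fsp[of n] by blast
        then show "revenue \<mu> (F n) < revenue \<mu> Fc - \<epsilon>" by linarith
      qed
      have r0: "\<And>n. 0 \<le> revenue \<mu> (F n)" unfolding revenue_def by (rule integral_nonneg_AE) (use Fnn in auto)
      have pos: "0 \<le> revenue \<mu> Fc - \<epsilon>" using lt[of 0] r0[of 0] by linarith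
      have "liminf (\<lambda>n. ennreal (revenue \<mu> (F n))) \<le> liminf (\<lambda>n. ennreal (revenue \<mu> Fc - \<epsilon>))"
      proof -
        have ev: "\<forall>n. ennreal (revenue \<mu> (F n)) \<le> ennreal (revenue \<mu> Fc - \<epsilon>)"
          using lt by (intro allI ennreal_leI less_imp_le)
        show ?thesis by (rule Liminf_mono[OF always_eventually[OF ev]])
      qed
      also have "\<dots> = ennreal (revenue \<mu> Fc - \<epsilon>)" by (rule Liminf_const) simp
      finally have "ennreal (revenue \<mu> Fc) \<le> ennreal (revenue \<mu> Fc - \<epsilon>)" using fatou by (rule order_trans[rotated])
      then have "revenue \<mu> Fc \<le> revenue \<mu> Fc - \<epsilon>" using pos by simp
      then show False using eps by linarith
    qed
  qed
  have part2: "\<forall>Fs. finite_sp_ir I Fs \<and> (\<forall>F. finite_sp_ir I F \<longrightarrow> revenue \<mu> F \<le> revenue \<mu> Fs)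
              \<longrightarrow> revenue \<mu> Fc \<le> revenue \<mu> Fs"
  proof (intro allI impI)
    fix Fs assume h: "finite_sp_ir I Fs \<and> (\<forall>F. finite_sp_ir I F \<longrightarrow> revenue \<mu> F \<le> revenue \<mu> Fs)"
    show "revenue \<mu> Fc \<le> revenue \<mu> Fs"
    proof (rule ccontr)
      assume "\<not> revenue \<mu> Fc \<le> revenue \<mu> Fs"
      then have d: "0 < (revenue \<mu> Fc - revenue \<mu> Fs) / 2" by simp
      then obtain F\<epsilon> where F: "finite_sp_ir I F\<epsilon>" "revenue \<mu> Fc - revenue \<mu> F\<epsilon> \<le> (revenue \<mu> Fc - revenue \<mu> Fs) / 2"
        using part1 by blast
      have "revenue \<mu> F\<epsilon> \<le> revenue \<mu> Fs" using h F(1) by blast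
      then show False using F(2) d by (smt (verit) field_sum_of_halves)
    qed
  qed
  show ?thesis using part1 part2 by blast
qed

end
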